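(* Let a natural gas network be given by a connected directed graph with node set $\{1,\dots,N\}$ and edge set $\{1,\dots,E\}$ (no self-loops, no parallel edges), with node-edge incidence matrix $A\in\mathbb{R}^{N\times E}$, and let $B\in\mathbb{R}^{N\times E}$, $\gamma_{1}\in\mathbb{R}^{E}$, $\gamma_{2}\in\mathbb{R}^{E\times N}$, $\gamma_{3}\in\mathbb{R}^{E\times E}$, $\delta\in\mathbb{R}^{N}$ be given. Fix a reference node $\mathrm{r}$ and a value $\mathring{\pi}_{\mathrm{r}}\in\mathbb{R}$. Define $\hat{\gamma}_{2}=A\gamma_{2}$, $\hat{\gamma}_{3}=B+A\gamma_{3}$, assume that the matrix $\hat{\gamma}_{2\backslash\mathrm{r}}$ obtained from $\hat{\gamma}_{2}$ by deleting its $\mathrm{r}$-th row and column is invertible, let $\breve{\gamma}_{2}\in\mathbb{R}^{N\times N}$ have zero $\mathrm{r}$-th row and column and remaining entries equal to those of $\hat{\gamma}_{2\backslash\mathrm{r}}^{-1}$, and set $\grave{\gamma}_{2}=\gamma_{2}\breve{\gamma}_{2}$, $\grave{\gamma}_{3}=\gamma_{2}\breve{\gamma}_{2}\hat{\gamma}_{3}-\gamma_{3}$. For $\vartheta\in\mathbb{R}^{N}$, $\kappa\in\mathbb{R}^{E}$, $\varphi\in\mathbb{R}^{E}$, $\pi\in\mathbb{R}^{N}$, $\alpha\in\mathbb{R}^{N\times N}$, $\beta\in\mathbb{R}^{E\times N}$, define the network response model, for $\xi\in\mathbb{R}^{N}$, $$\tilde{\vartheta}(\xi)=\vartheta+\alpha\xi,\quad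 \tilde{\kappa}(\xi)=\kappa+\beta\xi,\quad \tilde{\pi}(\xi)=\pi+\breve{\gamma}_{2}(\alpha-\hat{\gamma}_{3}\beta-I_{N})\xi,\quad \tilde{\varphi}(\xi)=\varphi+\big(\grave{\gamma}_{2}(\alpha-I_{N})-\grave{\gamma}_{3}\beta\big)\xi,$$ and $\tilde{\delta}(\xi)=\delta+\xi$. Suppose that $$A\varphi=\vartheta-B\kappa-\delta,\qquad (\alpha-B\beta)^{\top}\mathbb{1}=\mathbb{1},\qquad \varphi=\gamma_{1}+\gamma_{2}\pi+\gamma_{3}\kappa,\qquad \pi_{\mathrm{r}}=\mathring{\pi}_{\mathrm{r}},\ [\alpha]_{\mathrm{r}}=\mathbb{0}^{\top},\ [\beta]_{\mathrm{r}}=\mathbb{0}^{\top}.$$ Then the model is admissible, i.e., for every $\xi\in\mathbb{R}^{N}$, $$A\tilde{\varphi}(\xi)=\tilde{\vartheta}(\xi)-B\tilde{\kappa}(\xi)-\tilde{\delta}(\xi),\qquad \tilde{\varphi}(\xi)=\gamma_{1}+\gamma_{2}\tilde{\pi}(\xi)+\gamma_{3}\tilde{\kappa}(\xi),\qquad \tilde{\pi}_{\mathrm{r}}(\xi)=\mathring{\pi}_{\mathrm{r}}.$$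
   Context: The node-edge incidence matrix is defined by: for each edge $\ell=(n,n')$ directed from sending node $n$ to receiving node $n'$, $A_{n\ell}=+1$, $A_{n'\ell}=-1$, and $A_{k\ell}=0$ otherwise. $\mathbb{1}$ and $\mathbb{0}$ denote all-ones and all-zeros vectors of appropriate dimension, $I_N$ the identity matrix, and $[M]_{\mathrm{r}}$ the $\mathrm{r}$-th row of a matrix $M$. $\vartheta$ are gas injections, $\kappa$ pressure regulation rates, $\varphi$ flow rates, $\pi$ squared pressures, $\alpha,\beta$ recourse (policy) matrices, $\delta$ mean extractions and $\xi$ the extraction forecast error. The equation $\varphi=\gamma_{1}+\gamma_{2}\pi+\gamma_{3}\kappa$ is a linearized Weymouth equation with given coefficients $\gamma_1,\gamma_2,\gamma_3$. *)

theory Defs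
  imports "Jordan_Normal_Form.Matrix" "Jordan_Normal_Form.Determinant"
begin

text \<open>A directed graph with nodes 0..N-1 and edges 0..E-1 (0-based shift of 1..N, 1..E);
  edge l goes from node src l to node dst l.\<close>

definition gas_graph :: "nat \<Rightarrow> nat \<Rightarrow> (nat \<Rightarrow> nat) \<Rightarrow> (nat \<Rightarrow> nat) \<Rightarrow> bool" where
  "gas_graph N E src dst \<longleftrightarrow>
     (\<forall>l<E. src l < N \<and> dst l < N \<and> src l \<noteq> dst l) \<and>
     inj_on (\<lambda>l. (src l, dst l)) {..<E} \<and>
     (\<forall>i<N. \<forall>j<N. (\<lambda>u v. \<exists>l<E. (src l = u \<and> dst l = v) \<or> (src l = v \<and> dst l = u))\<^sup>*\<^sup>* i j)"

definition incidence_mat :: "nat \<Rightarrow> nat \<Rightarrow> (nat \<Rightarrow> nat) \<Rightarrow> (nat \<Rightarrow> nat) \<Rightarrow> real mat" where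
  "incidence_mat N E src dst =
     mat N E (\<lambda>(n, l). if n = src l then 1 else if n = dst l then -1 else 0)"

definition inv_mat :: "real mat \<Rightarrow> real mat" where
  "inv_mat M = (SOME B. inverts_mat M B \<and> inverts_mat B M)"

definition breve_mat :: "nat \<Rightarrow> real mat \<Rightarrow> real mat" where
  "breve_mat r M =
     (let Mi = inv_mat (mat_delete M r r) in
      mat (dim_row M) (dim_col M) (\<lambda>(i, j).
        if i = r \<or> j = r then 0
        else Mi $$ (if i < r then i else i - 1, if j < r then j else j - 1)))"

end

theory Submission
  imports Defs
begin

lemma sum_ins:
  fixes f :: "nat \<Rightarrow> real"
  assumes "r < N"
  shows "(\<Sum>j<N. f j) = f r + (\<Sum>j<N-1. f (insert_index r j))"
  using assms
proof (induction N)
  case 0 then show ?case by simp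
next
  case (Suc n)
  show ?case
  proof (cases "r = n")
    case True
    then show ?thesis by (simp add: add.commute)
  next
    case False
    with Suc.prems have rn: "r < n" by simp
    then obtain m where n: "n = Suc m" by (cases n) auto
    have "(\<Sum>j<Suc n. f j) = (\<Sum>j<n. f j) + f n" by simp
    also have "\<dots> = f r + (\<Sum>j<n-1. f (insert_index r j)) + f n" using Suc.IH rn by simp
    also have "\<dots> = f r + (\<Sum>j<Suc n-1. f (insert_index r j))"
      using rn n by simp
    finally show ?thesis .
  qed
qed

lemma sum_mult_vec:
  fixes X :: "real mat"
  assumes "X \<in> carrier_mat n m" "x \<in> carrier_vec m"
  shows "(\<Sum>i<n. (X *\<^sub>v x) $ i) = (\<Sum>j<m. (\<Sum>i<n. X $$ (i,j)) * x $ j)"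
proof -
  have "(\<Sum>i<n. (X *\<^sub>v x) $ i) = (\<Sum>i<n. \<Sum>j<m. X $$ (i,j) * x $ j)"
    using assms by (intro sum.cong) (auto simp: mult_mat_vec_def scalar_prod_def lessThan_atLeast0)
  also have "\<dots> = (\<Sum>j<m. \<Sum>i<n. X $$ (i,j) * x $ j)" by (rule sum.swap)
  also have "\<dots> = (\<Sum>j<m. (\<Sum>i<n. X $$ (i,j)) * x $ j)" by (simp add: sum_distrib_right)
  finally show ?thesis .
qed

lemma colsum_mult:
  fixes X Y :: "real mat"
  assumes "X \<in> carrier_mat n m" "Y \<in> carrier_mat m k" "j < k"
    and "\<And>l. l < m \<Longrightarrow> (\<Sum>i<n. X $$ (i,l)) = 0"
  shows "(\<Sum>i<n. (X * Y) $$ (i,j)) = 0"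
proof -
  have "(\<Sum>i<n. (X * Y) $$ (i,j)) = (\<Sum>i<n. \<Sum>l<m. X $$ (i,l) * Y $$ (l,j))"
    using assms by (intro sum.cong) (auto simp: scalar_prod_def lessThan_atLeast0)
  also have "\<dots> = (\<Sum>l<m. \<Sum>i<n. X $$ (i,l) * Y $$ (l,j))" by (rule sum.swap)
  also have "\<dots> = (\<Sum>l<m. (\<Sum>i<n. X $$ (i,l)) * Y $$ (l,j))" by (simp add: sum_distrib_right)
  also have "\<dots> = 0" using assms(4) by simp
  finally show ?thesis .
qed

lemma colsum_A:
  assumes "gas_graph N E src dst" "l < E"
  shows "(\<Sum>i<N. incidence_mat N E src dst $$ (i,l)) = 0"
proof -
  from assms have s: "src l < N" "dst l < N" "src l \<noteq> dst l" unfolding gas_graph_def by auto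
  have "(\<Sum>i<N. incidence_mat N E src dst $$ (i,l))
      = (\<Sum>i<N. (if i = src l then 1 else 0) + (if i = dst l then -1 else 0))"
    using assms s by (intro sum.cong) (auto simp: incidence_mat_def)
  also have "\<dots> = 0" using s by (simp add: sum.distrib)
  finally show ?thesis .
qed

lemma del_ins: "(if insert_index r k < r then insert_index r k else insert_index r k - 1) = k"
  by (simp add: insert_index_def)

lemma ins_lt: "r < N \<Longrightarrow> k < N - 1 \<Longrightarrow> insert_index r k < N"
  by (auto simp: insert_index_def)

lemma breve_index:
  assumes "G \<in> carrier_mat N N" "i < N" "j < N"
  shows "breve_mat r G $$ (i,j) = (if i = r \<or> j = r then 0
        else inv_mat (mat_delete G r r) $$ (if i < r then i else i - 1, if j < r then j else j - 1))"
  using assms by (simp add: breve_mat_def Let_def)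

lemma mat_delete_idx:
  "i < dim_row A - 1 \<Longrightarrow> j < dim_col A - 1 \<Longrightarrow>
   mat_delete A r s $$ (i,j) = A $$ (insert_index r i, insert_index s j)"
  by (simp add: mat_delete_def insert_index_def)

lemma key:
  fixes G :: "real mat"
  assumes G: "G \<in> carrier_mat N N" and r: "r < N"
    and inv: "invertible_mat (mat_delete G r r)"
    and cs: "\<And>j. j < N \<Longrightarrow> (\<Sum>i<N. G $$ (i,j)) = 0"
    and v: "v \<in> carrier_vec N" and sv: "(\<Sum>i<N. v $ i) = 0"
  shows "G *\<^sub>v (breve_mat r G *\<^sub>v v) = v"
proof -
  define D where "D = mat_delete G r r"
  define Mi where "Mi = inv_mat D"
  have Dc: "D \<in> carrier_mat (N-1) (N-1)" unfolding D_def by (rule mat_delete_carrier[OF G])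
  have "inverts_mat D Mi \<and> inverts_mat Mi D"
    unfolding Mi_def inv_mat_def by (rule someI_ex) (use inv in \<open>auto simp: D_def invertible_mat_def\<close>)
  then have DM: "D * Mi = 1\<^sub>m (N-1)" and MD: "Mi * D = 1\<^sub>m (dim_row Mi)"
    using Dc by (auto simp: inverts_mat_def)
  have Mic: "Mi \<in> carrier_mat (N-1) (N-1)"
  proof -
    have "dim_col Mi = N - 1" using DM by (metis index_mult_mat(3) index_one_mat(3))
    moreover have "dim_row Mi = N - 1" using MD Dc
      by (metis carrier_matD(2) index_mult_mat(3) index_one_mat(3))
    ultimately show ?thesis by auto
  qed
  define vd where "vd = vec (N-1) (\<lambda>j. v $ insert_index r j)"
  define u where "u = Mi *\<^sub>v vd"
  define w where "w = breve_mat r G *\<^sub>v v"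
  have vdc: "vd \<in> carrier_vec (N-1)" by (simp add: vd_def)
  have uc: "u \<in> carrier_vec (N-1)" unfolding u_def using Mic vdc by (rule mult_mat_vec_carrier)
  have bc: "breve_mat r G \<in> carrier_mat N N" using G by (simp add: breve_mat_def)
  have wc: "w \<in> carrier_vec N" unfolding w_def using bc v by (rule mult_mat_vec_carrier)
  have "w $ r = (\<Sum>j<N. breve_mat r G $$ (r, j) * v $ j)"
    using r bc v by (simp add: w_def scalar_prod_def lessThan_atLeast0)
  also have "\<dots> = 0" using breve_index[OF G r] by simp
  finally have wr: "w $ r = 0" .
  have wins: "w $ insert_index r k = u $ k" if k: "k < N - 1" for k
  proof -
    have kk: "insert_index r k < N" using k r by (auto simp: insert_index_def)
    have "w $ insert_index r k = row (breve_mat r G) (insert_index r k) \<bullet> v"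
      using kk bc by (simp add: w_def)
    also have "\<dots> = (\<Sum>j<N. breve_mat r G $$ (insert_index r k, j) * v $ j)"
      using kk bc v by (simp add: scalar_prod_def lessThan_atLeast0)
    also have "\<dots> = (\<Sum>j<N-1. breve_mat r G $$ (insert_index r k, insert_index r j) * v $ insert_index r j)
        + breve_mat r G $$ (insert_index r k, r) * v $ r"
      using sum_ins[OF r] by simp
    also have "\<dots> = (\<Sum>j<N-1. Mi $$ (k, j) * vd $ j)"
      using kk k r
      by (auto simp: breve_index[OF G] del_ins ins_lt Mi_def D_def vd_def intro!: sum.cong)
    also have "\<dots> = u $ k" using k Mic vdc by (simp add: u_def scalar_prod_def lessThan_atLeast0)
    finally show ?thesis .
  qed
  have Gw: "(G *\<^sub>v w) $ insert_index r i = v $ insert_index r i" if i: "i < N - 1" for i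
  proof -
    have ii: "insert_index r i < N" using i r by (auto simp: insert_index_def)
    have "(G *\<^sub>v w) $ insert_index r i = (\<Sum>k<N. G $$ (insert_index r i, k) * w $ k)"
      using ii G wc by (simp add: scalar_prod_def lessThan_atLeast0)
    also have "\<dots> = (\<Sum>k<N-1. G $$ (insert_index r i, insert_index r k) * w $ insert_index r k)"
      using sum_ins[OF r] wr by simp
    also have "\<dots> = (\<Sum>k<N-1. D $$ (i, k) * u $ k)"
      using G i wins
      by (auto simp: D_def mat_delete_idx intro!: sum.cong)
    also have "\<dots> = (D *\<^sub>v u) $ i" using i Dc uc by (simp add: scalar_prod_def lessThan_atLeast0)
    also have "D *\<^sub>v u = vd"
    proof -
      have "D *\<^sub>v u = (D * Mi) *\<^sub>v vd" unfolding u_def using Dc Mic vdc by (rule assoc_mult_mat_vec[symmetric])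
      also have "\<dots> = vd" unfolding DM using vdc by (rule one_mult_mat_vec)
      finally show ?thesis .
    qed
    finally show ?thesis using i by (simp add: vd_def)
  qed
  have s0: "(\<Sum>i<N. (G *\<^sub>v w) $ i) = 0"
    using sum_mult_vec[OF G wc] cs by simp
  have "(G *\<^sub>v w) $ r = v $ r"
  proof -
    have "0 = (G *\<^sub>v w) $ r + (\<Sum>i<N-1. (G *\<^sub>v w) $ insert_index r i)"
      using s0 sum_ins[OF r] by simp
    moreover have "0 = v $ r + (\<Sum>i<N-1. v $ insert_index r i)"
      using sv sum_ins[OF r] by simp
    moreover have "(\<Sum>i<N-1. (G *\<^sub>v w) $ insert_index r i) = (\<Sum>i<N-1. v $ insert_index r i)"
      using Gw by simp
    ultimately show ?thesis by linarith
  qed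
  have "G *\<^sub>v w = v"
  proof (rule eq_vecI)
    show "dim_vec (G *\<^sub>v w) = dim_vec v" using G v by simp
    fix i assume "i < dim_vec v"
    then have i: "i < N" using v by simp
    show "(G *\<^sub>v w) $ i = v $ i"
    proof (cases "i = r")
      case True then show ?thesis using \<open>(G *\<^sub>v w) $ r = v $ r\<close> by simp
    next
      case False
      define i' where "i' = (if i < r then i else i - 1)"
      have "insert_index r i' = i" "i' < N - 1" using False i r by (auto simp: i'_def insert_index_def)
      then show ?thesis using Gw by metis
    qed
  qed
  then show ?thesis by (simp add: w_def)
qed


declare minus_carrier_mat[simp]

theorem lemma2:
  fixes N E r :: nat
    and src dst :: "nat \<Rightarrow> nat"
    and A B \<gamma>3 :: "real mat" and \<gamma>2 :: "real mat"
    and \<gamma>1 \<delta> :: "real vec"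
    and \<pi>r :: real
    and \<theta> \<kappa> \<phi> \<pi> :: "real vec"
    and \<alpha> \<beta> :: "real mat"
    and \<gamma>2h \<gamma>3h \<gamma>2b \<gamma>2g \<gamma>3g :: "real mat"
    and \<theta>t \<kappa>t \<pi>t \<phi>t \<delta>t :: "real vec \<Rightarrow> real vec"
  assumes graph: "gas_graph N E src dst"
    and A_def: "A = incidence_mat N E src dst"
    and B: "B \<in> carrier_mat N E"
    and g1: "\<gamma>1 \<in> carrier_vec E"
    and g2: "\<gamma>2 \<in> carrier_mat E N"
    and g3: "\<gamma>3 \<in> carrier_mat E E"
    and dl: "\<delta> \<in> carrier_vec N"
    and r: "r < N"
    and th: "\<theta> \<in> carrier_vec N"
    and ka: "\<kappa> \<in> carrier_vec E"
    and ph: "\<phi> \<in> carrier_vec E"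
    and pi: "\<pi> \<in> carrier_vec N"
    and al: "\<alpha> \<in> carrier_mat N N"
    and be: "\<beta> \<in> carrier_mat E N"
    and g2h_def: "\<gamma>2h = A * \<gamma>2"
    and g3h_def: "\<gamma>3h = B + A * \<gamma>3"
    and inv: "invertible_mat (mat_delete \<gamma>2h r r)"
    and g2b_def: "\<gamma>2b = breve_mat r \<gamma>2h"
    and g2g_def: "\<gamma>2g = \<gamma>2 * \<gamma>2b"
    and g3g_def: "\<gamma>3g = \<gamma>2 * \<gamma>2b * \<gamma>3h - \<gamma>3"
    and tht_def: "\<And>\<xi>. \<theta>t \<xi> = \<theta> + \<alpha> *\<^sub>v \<xi>"
    and kat_def: "\<And>\<xi>. \<kappa>t \<xi> = \<kappa> + \<beta> *\<^sub>v \<xi>"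
    and pit_def: "\<And>\<xi>. \<pi>t \<xi> = \<pi> + \<gamma>2b * (\<alpha> - \<gamma>3h * \<beta> - 1\<^sub>m N) *\<^sub>v \<xi>"
    and pht_def: "\<And>\<xi>. \<phi>t \<xi> = \<phi> + (\<gamma>2g * (\<alpha> - 1\<^sub>m N) - \<gamma>3g * \<beta>) *\<^sub>v \<xi>"
    and dlt_def: "\<And>\<xi>. \<delta>t \<xi> = \<delta> + \<xi>"
    and flow: "A *\<^sub>v \<phi> = \<theta> - B *\<^sub>v \<kappa> - \<delta>"
    and bal: "transpose_mat (\<alpha> - B * \<beta>) *\<^sub>v vec N (\<lambda>_. 1) = vec N (\<lambda>_. 1)"
    and weym: "\<phi> = \<gamma>1 + \<gamma>2 *\<^sub>v \<pi> + \<gamma>3 *\<^sub>v \<kappa>"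
    and piref: "\<pi> $ r = \<pi>r"
    and alr: "row \<alpha> r = 0\<^sub>v N"
    and ber: "r < E \<longrightarrow> row \<beta> r = 0\<^sub>v N"
  shows "\<forall>\<xi> \<in> carrier_vec N.
           A *\<^sub>v \<phi>t \<xi> = \<theta>t \<xi> - B *\<^sub>v \<kappa>t \<xi> - \<delta>t \<xi> \<and>
           \<phi>t \<xi> = \<gamma>1 + \<gamma>2 *\<^sub>v \<pi>t \<xi> + \<gamma>3 *\<^sub>v \<kappa>t \<xi> \<and>
           \<pi>t \<xi> $ r = \<pi>r"
proof (intro ballI)
  fix \<xi> :: "real vec" assume xi: "\<xi> \<in> carrier_vec N"
  have Ac: "A \<in> carrier_mat N E" by (simp add: A_def incidence_mat_def)
  have csA: "\<And>l. l < E \<Longrightarrow> (\<Sum>i<N. A $$ (i,l)) = 0"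
    unfolding A_def by (rule colsum_A[OF graph])
  have g2hc: "\<gamma>2h \<in> carrier_mat N N" using Ac g2 by (simp add: g2h_def)
  have g3hc: "\<gamma>3h \<in> carrier_mat N E" using Ac g3 B by (simp add: g3h_def)
  have g2bc: "\<gamma>2b \<in> carrier_mat N N" using g2hc by (simp add: g2b_def breve_mat_def)
  define a where "a = \<alpha> *\<^sub>v \<xi>"
  define b where "b = \<beta> *\<^sub>v \<xi>"
  define c where "c = \<gamma>3h *\<^sub>v b"
  define v where "v = a - c - \<xi>"
  define w where "w = \<gamma>2b *\<^sub>v v"
  have ac: "a \<in> carrier_vec N" unfolding a_def using al xi by (rule mult_mat_vec_carrier)
  have bc: "b \<in> carrier_vec E" unfolding b_def using be xi by (rule mult_mat_vec_carrier)
  have cc: "c \<in> carrier_vec N" unfolding c_def using g3hc bc by (rule mult_mat_vec_carrier)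
  have vc: "v \<in> carrier_vec N" using ac cc xi by (simp add: v_def)
  have wc: "w \<in> carrier_vec N" unfolding w_def using g2bc vc by (rule mult_mat_vec_carrier)
  have Mv: "(\<alpha> - \<gamma>3h * \<beta> - 1\<^sub>m N) *\<^sub>v \<xi> = v"
  proof -
    have "(\<alpha> - \<gamma>3h * \<beta> - 1\<^sub>m N) *\<^sub>v \<xi> = (\<alpha> - \<gamma>3h * \<beta>) *\<^sub>v \<xi> - 1\<^sub>m N *\<^sub>v \<xi>"
      using al g3hc be xi by (intro minus_mult_distrib_mat_vec) auto
    also have "(\<alpha> - \<gamma>3h * \<beta>) *\<^sub>v \<xi> = a - c"
      using al g3hc be xi by (simp add: minus_mult_distrib_mat_vec a_def c_def b_def)
    finally show ?thesis using xi by (simp add: v_def)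
  qed
  have pit: "\<pi>t \<xi> = \<pi> + w"
  proof -
    have Mc0: "\<alpha> - \<gamma>3h * \<beta> - 1\<^sub>m N \<in> carrier_mat N N" using al g3hc be by simp
    have "\<gamma>2b * (\<alpha> - \<gamma>3h * \<beta> - 1\<^sub>m N) *\<^sub>v \<xi> = \<gamma>2b *\<^sub>v ((\<alpha> - \<gamma>3h * \<beta> - 1\<^sub>m N) *\<^sub>v \<xi>)"
      using g2bc Mc0 xi by (rule assoc_mult_mat_vec)
    then show ?thesis using Mv by (simp add: pit_def w_def)
  qed
  have kat: "\<kappa>t \<xi> = \<kappa> + b" by (simp add: kat_def b_def)
  have phit: "\<phi>t \<xi> = \<phi> + (\<gamma>2 *\<^sub>v (\<gamma>2b *\<^sub>v (a - \<xi>)) - (\<gamma>2 *\<^sub>v (\<gamma>2b *\<^sub>v c) - \<gamma>3 *\<^sub>v b))"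
  proof -
    have am: "(\<alpha> - 1\<^sub>m N) *\<^sub>v \<xi> = a - \<xi>"
      using al xi by (simp add: minus_mult_distrib_mat_vec[OF al one_carrier_mat xi] a_def)
    have g22: "\<gamma>2 * \<gamma>2b \<in> carrier_mat E N" using g2 g2bc by simp
    have e1: "(\<gamma>2g * (\<alpha> - 1\<^sub>m N)) *\<^sub>v \<xi> = \<gamma>2 *\<^sub>v (\<gamma>2b *\<^sub>v (a - \<xi>))"
    proof -
      have "(\<gamma>2g * (\<alpha> - 1\<^sub>m N)) *\<^sub>v \<xi> = \<gamma>2g *\<^sub>v ((\<alpha> - 1\<^sub>m N) *\<^sub>v \<xi>)"
        unfolding g2g_def using g22 _ xi by (rule assoc_mult_mat_vec) (use al in simp)
      also have "\<dots> = \<gamma>2 *\<^sub>v (\<gamma>2b *\<^sub>v (a - \<xi>))" unfolding am g2g_def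
        using g2 g2bc _ by (rule assoc_mult_mat_vec) (use ac xi in simp)
      finally show ?thesis .
    qed
    have g3gc: "\<gamma>3g \<in> carrier_mat E E" using g22 g3hc g3 by (simp add: g3g_def)
    have e2: "\<gamma>3g * \<beta> *\<^sub>v \<xi> = \<gamma>2 *\<^sub>v (\<gamma>2b *\<^sub>v c) - \<gamma>3 *\<^sub>v b"
    proof -
      have "\<gamma>3g * \<beta> *\<^sub>v \<xi> = \<gamma>3g *\<^sub>v b" unfolding b_def using g3gc be xi by (rule assoc_mult_mat_vec)
      also have "\<dots> = (\<gamma>2 * \<gamma>2b * \<gamma>3h) *\<^sub>v b - \<gamma>3 *\<^sub>v b" unfolding g3g_def
        by (rule minus_mult_distrib_mat_vec) (use g22 g3hc g3 bc in simp_all)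
      also have "(\<gamma>2 * \<gamma>2b * \<gamma>3h) *\<^sub>v b = (\<gamma>2 * \<gamma>2b) *\<^sub>v c" unfolding c_def
        using g22 g3hc bc by (rule assoc_mult_mat_vec)
      also have "\<dots> = \<gamma>2 *\<^sub>v (\<gamma>2b *\<^sub>v c)" using g2 g2bc cc by (rule assoc_mult_mat_vec)
      finally show ?thesis .
    qed
    have "(\<gamma>2g * (\<alpha> - 1\<^sub>m N) - \<gamma>3g * \<beta>) *\<^sub>v \<xi> = (\<gamma>2g * (\<alpha> - 1\<^sub>m N)) *\<^sub>v \<xi> - \<gamma>3g * \<beta> *\<^sub>v \<xi>"
      using g2 g2bc al g3hc g3 be xi
      by (intro minus_mult_distrib_mat_vec) (auto simp: g2g_def g3g_def)
    then show ?thesis using e1 e2 by (simp add: pht_def)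
  qed
  have split: "\<gamma>2 *\<^sub>v w = \<gamma>2 *\<^sub>v (\<gamma>2b *\<^sub>v (a - \<xi>)) - \<gamma>2 *\<^sub>v (\<gamma>2b *\<^sub>v c)"
  proof -
    have "\<gamma>2b *\<^sub>v v = \<gamma>2b *\<^sub>v (a - \<xi>) - \<gamma>2b *\<^sub>v c"
    proof -
      have "v = (a - \<xi>) - c" using ac cc xi by (auto simp: v_def)
      then show ?thesis using g2bc ac cc xi by (simp add: mult_minus_distrib_mat_vec)
    qed
    then show ?thesis using g2 g2bc ac cc xi by (simp add: w_def mult_minus_distrib_mat_vec)
  qed
  have phit2: "\<phi>t \<xi> = \<phi> + \<gamma>2 *\<^sub>v w + \<gamma>3 *\<^sub>v b"
  proof -
    have c1: "\<gamma>2 *\<^sub>v (\<gamma>2b *\<^sub>v (a - \<xi>)) \<in> carrier_vec E" using g2 g2bc ac xi by simp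
    have c2: "\<gamma>2 *\<^sub>v (\<gamma>2b *\<^sub>v c) \<in> carrier_vec E" using g2 g2bc cc by simp
    have c3: "\<gamma>3 *\<^sub>v b \<in> carrier_vec E" using g3 bc by simp
    show ?thesis unfolding phit split
      by (rule eq_vecI) (use c1 c2 c3 ph g2 g3 in auto)
  qed
  have sv: "(\<Sum>i<N. v $ i) = 0"
  proof -
    have Mc: "\<alpha> - \<gamma>3h * \<beta> - 1\<^sub>m N \<in> carrier_mat N N" using al g3hc be by simp
    have cs: "(\<Sum>i<N. (\<alpha> - \<gamma>3h * \<beta> - 1\<^sub>m N) $$ (i,j)) = 0" if j: "j < N" for j
    proof -
      have bj: "(\<Sum>i<N. (\<alpha> - B * \<beta>) $$ (i,j)) = 1"
      proof -
        have "(transpose_mat (\<alpha> - B * \<beta>) *\<^sub>v vec N (\<lambda>_. 1)) $ j = 1" using bal j by simp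
        moreover have "(transpose_mat (\<alpha> - B * \<beta>) *\<^sub>v vec N (\<lambda>_. 1)) $ j
            = (\<Sum>i<N. (\<alpha> - B * \<beta>) $$ (i,j))"
          using al B be j by (simp add: scalar_prod_def lessThan_atLeast0)
        ultimately show ?thesis by simp
      qed
      have z: "(\<Sum>i<N. (A * (\<gamma>3 * \<beta>)) $$ (i,j)) = 0"
        using colsum_mult[OF Ac _ j csA] g3 be by simp
      have "(\<Sum>i<N. (\<alpha> - \<gamma>3h * \<beta> - 1\<^sub>m N) $$ (i,j))
          = (\<Sum>i<N. (\<alpha> - B * \<beta>) $$ (i,j) - (A * (\<gamma>3 * \<beta>)) $$ (i,j) - (if i = j then 1 else 0))"
      proof (rule sum.cong)
        fix i assume "i \<in> {..<N}"
        then have i: "i < N" by simp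
        have "(\<gamma>3h * \<beta>) $$ (i,j) = (B * \<beta>) $$ (i,j) + (A * (\<gamma>3 * \<beta>)) $$ (i,j)"
        proof -
          have "\<gamma>3h * \<beta> = B * \<beta> + A * \<gamma>3 * \<beta>"
            unfolding g3h_def using B Ac g3 be by (simp add: add_mult_distrib_mat)
          also have "A * \<gamma>3 * \<beta> = A * (\<gamma>3 * \<beta>)" using Ac g3 be by (simp add: assoc_mult_mat)
          finally show ?thesis using i j B be Ac g3 by simp
        qed
        then show "(\<alpha> - \<gamma>3h * \<beta> - 1\<^sub>m N) $$ (i,j)
          = (\<alpha> - B * \<beta>) $$ (i,j) - (A * (\<gamma>3 * \<beta>)) $$ (i,j) - (if i = j then 1 else 0)"
          using i j al g3hc be B by simp
      qed simp
      also have "\<dots> = 1 - 0 - 1" using bj z j by (simp add: sum_subtractf)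
      finally show ?thesis by simp
    qed
    have "(\<Sum>i<N. v $ i) = (\<Sum>i<N. ((\<alpha> - \<gamma>3h * \<beta> - 1\<^sub>m N) *\<^sub>v \<xi>) $ i)" by (simp add: Mv)
    also have "\<dots> = 0" using sum_mult_vec[OF Mc xi] cs by simp
    finally show ?thesis .
  qed
  have csg: "(\<Sum>i<N. \<gamma>2h $$ (i,j)) = 0" if "j < N" for j
    unfolding g2h_def using colsum_mult[OF Ac g2 that csA] .
  have Gw: "\<gamma>2h *\<^sub>v w = v"
    unfolding w_def g2b_def using key[OF g2hc r inv[unfolded g2b_def] csg vc sv] .
  have Gw': "A *\<^sub>v (\<gamma>2 *\<^sub>v w) = v" using Gw assoc_mult_mat_vec[OF Ac g2 wc] by (simp add: g2h_def)
  have Ag3: "A *\<^sub>v (\<gamma>3 *\<^sub>v b) = (A * \<gamma>3) *\<^sub>v b" using assoc_mult_mat_vec[OF Ac g3 bc] by simp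
  have cdef: "c = B *\<^sub>v b + (A * \<gamma>3) *\<^sub>v b"
    unfolding c_def g3h_def using B Ac g3 bc by (simp add: add_mult_distrib_mat_vec)
  have claim1: "A *\<^sub>v \<phi>t \<xi> = \<theta>t \<xi> - B *\<^sub>v \<kappa>t \<xi> - \<delta>t \<xi>"
  proof -
    have c1: "\<gamma>2 *\<^sub>v w \<in> carrier_vec E" using g2 wc by simp
    have c3: "\<gamma>3 *\<^sub>v b \<in> carrier_vec E" using g3 bc by simp
    have "A *\<^sub>v \<phi>t \<xi> = A *\<^sub>v \<phi> + A *\<^sub>v (\<gamma>2 *\<^sub>v w) + A *\<^sub>v (\<gamma>3 *\<^sub>v b)"
      unfolding phit2 using Ac ph c1 c3 by (simp add: mult_add_distrib_mat_vec assoc_add_vec[of _ N])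
    also have "\<dots> = (\<theta> - B *\<^sub>v \<kappa> - \<delta>) + v + (A * \<gamma>3) *\<^sub>v b"
      using flow Gw' Ag3 by simp
    also have "B *\<^sub>v \<kappa>t \<xi> = B *\<^sub>v \<kappa> + B *\<^sub>v b"
      unfolding kat using B ka bc by (simp add: mult_add_distrib_mat_vec)
    ultimately show ?thesis
      using th dl xi ac bc ka B Ac g3 unfolding v_def cdef tht_def dlt_def a_def[symmetric]
      by (intro eq_vecI) auto
  qed
  have claim2: "\<phi>t \<xi> = \<gamma>1 + \<gamma>2 *\<^sub>v \<pi>t \<xi> + \<gamma>3 *\<^sub>v \<kappa>t \<xi>"
  proof -
    have "\<gamma>2 *\<^sub>v \<pi>t \<xi> = \<gamma>2 *\<^sub>v \<pi> + \<gamma>2 *\<^sub>v w" unfolding pit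
      using g2 pi wc by (simp add: mult_add_distrib_mat_vec)
    moreover have "\<gamma>3 *\<^sub>v \<kappa>t \<xi> = \<gamma>3 *\<^sub>v \<kappa> + \<gamma>3 *\<^sub>v b" unfolding kat
      using g3 ka bc by (simp add: mult_add_distrib_mat_vec)
    ultimately show ?thesis unfolding phit2 weym
      using g1 g2 g3 pi ka wc bc by (intro eq_vecI) auto
  qed
  have claim3: "\<pi>t \<xi> $ r = \<pi>r"
  proof -
    have "w $ r = (\<Sum>j<N. \<gamma>2b $$ (r, j) * v $ j)"
      using r g2bc vc by (simp add: w_def scalar_prod_def lessThan_atLeast0)
    also have "\<dots> = 0" unfolding g2b_def using breve_index[OF g2hc r] by simp
    finally show ?thesis using pit piref r pi wc by simp
  qed
  show "A *\<^sub>v \<phi>t \<xi> = \<theta>t \<xi> - B *\<^sub>v \<kappa>t \<xi> - \<delta>t \<xi> \<and>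
           \<phi>t \<xi> = \<gamma>1 + \<gamma>2 *\<^sub>v \<pi>t \<xi> + \<gamma>3 *\<^sub>v \<kappa>t \<xi> \<and>
           \<pi>t \<xi> $ r = \<pi>r" using claim1 claim2 claim3 by blast
qed

end
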